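(* Assume the setting in the context, in particular that $R\,D_{q,t}w=2S\,w$ and $R\,D_{q,t}f=2Sf+T$ where $R(x,t),S(x,t),T(x,t)$ are polynomials in $x$. For $n\ge2$ define $$\Phi_n=R\big(\epsilon_nD_{q,t}p_n-p_nD_{q,t}\epsilon_n\big)+2S\epsilon_n\,p_n(x,qt),$$ $$\Psi_n=a_nR\big(\epsilon_{n-1}D_{q,t}p_n-p_{n-1}D_{q,t}\epsilon_n\big)+S\big(2a_n\epsilon_{n-1}\,p_n(x,qt)-1\big).$$ Then $\Phi_n$ and $\Psi_n$ are polynomials in $x$, and for $n\ge2$ $$D_{q,t}Y_n=B_nY_n,\qquad B_n=\frac{1}{R-2t(1-q)S}\begin{pmatrix}\Psi_n-S&-a_n\Phi_n\\ a_n\Phi_{n-1}&\Psi_{n-1}-S-(x-b_{n-1})\Phi_{n-1}\end{pmatrix}.$$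
   Context: Fix $q\in\mathbb{C}$ with $0<|q|<1$. For a function $g(x,t)$, $D_{q,t}g(x,t)=\frac{g(x,t)-g(x,qt)}{t(1-q)}$. Let $w(x,t)$ be a weight depending on a parameter $t$ and $\mu_k(t)$ moments defining a linear functional $L_t(x^k)=\mu_k(t)$ with all Hankel determinants $\det(\mu_{i+j})_{i,j=0}^{n-1}$ nonzero and moments growing at most geometrically. Let $p_n(x,t)=\gamma_nx^n+\dots$ be the orthonormal polynomials for $L_t$; they satisfy $a_{n+1}p_{n+1}=(x-b_n)p_n-a_np_{n-1}$, $a_n=\gamma_{n-1}/\gamma_n$ (all depending on $t$). The Stieltjes function is $f(x,t)=\sum_{k\ge0}\mu_k(t)x^{-k-1}$; $\phi_{n-1}$ is the polynomial part (in $x$) of $fp_n$ and $\epsilon_n=fp_n-\phi_{n-1}$. $R,S$ are polynomials in $x$ (coefficients depending on $t$) with $R-2t(1-q)S\not\equiv 0$, satisfying $R\,D_{q,t}w=2Sw$. Set $Y_n=\begin{pmatrix}p_n&\epsilon_n/w\\ p_{n-1}&\epsilon_{n-1}/w\end{pmatrix}$. Identities are understood as identities of functions for $|x|$ large where all terms are defined. *)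

theory Defs
  imports "HOL-Computational_Algebra.Polynomial" "Jordan_Normal_Form.Determinant"
begin

definition qD :: "complex \<Rightarrow> (complex \<Rightarrow> complex \<Rightarrow> complex) \<Rightarrow> complex \<Rightarrow> complex \<Rightarrow> complex" where
  "qD q g x t = (g x t - g x (q * t)) / (t * (1 - q))"

definition qDmat :: "complex \<Rightarrow> (complex \<Rightarrow> complex \<Rightarrow> complex mat) \<Rightarrow> complex \<Rightarrow> complex \<Rightarrow> complex mat" where
  "qDmat q G x t = mat 2 2 (\<lambda>(i,j). (G x t $$ (i,j) - G x (q * t) $$ (i,j)) / (t * (1 - q)))"

definition Lfun :: "(nat \<Rightarrow> complex) \<Rightarrow> complex poly \<Rightarrow> complex" where
  "Lfun m P = (\<Sum>i\<le>degree P. coeff P i * m i)"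

definition hankel_det :: "(nat \<Rightarrow> complex) \<Rightarrow> nat \<Rightarrow> complex" where
  "hankel_det m n = det (mat n n (\<lambda>(i,j). m (i + j)))"

definition stieltjes :: "(nat \<Rightarrow> complex) \<Rightarrow> complex \<Rightarrow> complex" where
  "stieltjes m x = (\<Sum>k. m k / x ^ (k + 1))"

(* polynomial part (in x) of f * P, f the Stieltjes function of m *)
definition polypart :: "(nat \<Rightarrow> complex) \<Rightarrow> complex poly \<Rightarrow> complex poly" where
  "polypart m P = Poly (map (\<lambda>j. \<Sum>i\<in>{j+1..degree P}. coeff P i * m (i - j - 1)) [0..<degree P])"

definition epsf :: "(nat \<Rightarrow> complex) \<Rightarrow> complex poly \<Rightarrow> complex \<Rightarrow> complex" where
  "epsf m P x = stieltjes m x * poly P x - poly (polypart m P) x"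

(* data depending on t: mu k t moments, p n t orthonormal polynomials *)
definition pF :: "(nat \<Rightarrow> complex \<Rightarrow> complex poly) \<Rightarrow> nat \<Rightarrow> complex \<Rightarrow> complex \<Rightarrow> complex" where
  "pF p n x t = poly (p n t) x"

definition epsF :: "(nat \<Rightarrow> complex \<Rightarrow> complex) \<Rightarrow> (nat \<Rightarrow> complex \<Rightarrow> complex poly) \<Rightarrow> nat \<Rightarrow> complex \<Rightarrow> complex \<Rightarrow> complex" where
  "epsF mu p n x t = epsf (\<lambda>k. mu k t) (p n t) x"

definition acoef :: "(nat \<Rightarrow> complex \<Rightarrow> complex poly) \<Rightarrow> nat \<Rightarrow> complex \<Rightarrow> complex" where
  "acoef p n t = lead_coeff (p (n - 1) t) / lead_coeff (p n t)"

definition bcoef :: "(nat \<Rightarrow> complex \<Rightarrow> complex) \<Rightarrow> (nat \<Rightarrow> complex \<Rightarrow> complex poly) \<Rightarrow> nat \<Rightarrow> complex \<Rightarrow> complex" where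
  "bcoef mu p n t = Lfun (\<lambda>k. mu k t) ([:0, 1:] * p n t * p n t)"

definition PhiF :: "complex \<Rightarrow> (nat \<Rightarrow> complex \<Rightarrow> complex) \<Rightarrow> (nat \<Rightarrow> complex \<Rightarrow> complex poly)
    \<Rightarrow> (complex \<Rightarrow> complex poly) \<Rightarrow> (complex \<Rightarrow> complex poly) \<Rightarrow> nat \<Rightarrow> complex \<Rightarrow> complex \<Rightarrow> complex" where
  "PhiF q mu p R S n x t =
     poly (R t) x * (epsF mu p n x t * qD q (pF p n) x t - pF p n x t * qD q (epsF mu p n) x t)
     + 2 * poly (S t) x * epsF mu p n x t * pF p n x (q * t)"

definition PsiF :: "complex \<Rightarrow> (nat \<Rightarrow> complex \<Rightarrow> complex) \<Rightarrow> (nat \<Rightarrow> complex \<Rightarrow> complex poly)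
    \<Rightarrow> (complex \<Rightarrow> complex poly) \<Rightarrow> (complex \<Rightarrow> complex poly) \<Rightarrow> nat \<Rightarrow> complex \<Rightarrow> complex \<Rightarrow> complex" where
  "PsiF q mu p R S n x t =
     acoef p n t * poly (R t) x * (epsF mu p (n - 1) x t * qD q (pF p n) x t - pF p (n - 1) x t * qD q (epsF mu p n) x t)
     + poly (S t) x * (2 * acoef p n t * epsF mu p (n - 1) x t * pF p n x (q * t) - 1)"

definition Ymat :: "(nat \<Rightarrow> complex \<Rightarrow> complex) \<Rightarrow> (nat \<Rightarrow> complex \<Rightarrow> complex poly)
    \<Rightarrow> (complex \<Rightarrow> complex \<Rightarrow> complex) \<Rightarrow> nat \<Rightarrow> complex \<Rightarrow> complex \<Rightarrow> complex mat" where
  "Ymat mu p w n x t = mat_of_rows_list 2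
     [[pF p n x t, epsF mu p n x t / w x t],
      [pF p (n - 1) x t, epsF mu p (n - 1) x t / w x t]]"

definition Bmat :: "complex \<Rightarrow> (nat \<Rightarrow> complex \<Rightarrow> complex) \<Rightarrow> (nat \<Rightarrow> complex \<Rightarrow> complex poly)
    \<Rightarrow> (complex \<Rightarrow> complex poly) \<Rightarrow> (complex \<Rightarrow> complex poly) \<Rightarrow> nat \<Rightarrow> complex \<Rightarrow> complex \<Rightarrow> complex mat" where
  "Bmat q mu p R S n x t =
     (1 / (poly (R t) x - 2 * t * (1 - q) * poly (S t) x)) \<cdot>\<^sub>m mat_of_rows_list 2
     [[PsiF q mu p R S n x t - poly (S t) x, - acoef p n t * PhiF q mu p R S n x t],
      [acoef p n t * PhiF q mu p R S (n - 1) x t,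
       PsiF q mu p R S (n - 1) x t - poly (S t) x - (x - bcoef mu p (n - 1) t) * PhiF q mu p R S (n - 1) x t]]"

end

theory Submission
  imports Defs
begin


lemma Lfun_eq: "degree P \<le> N \<Longrightarrow> Lfun m P = (\<Sum>i\<le>N. coeff P i * m i)"
  unfolding Lfun_def
  by (rule sum.mono_neutral_left) (auto simp: coeff_eq_0)

lemma Lfun_add: "Lfun m (P + Q) = Lfun m P + Lfun m Q"
proof -
  let ?N = "max (degree P) (degree Q)"
  have "Lfun m (P+Q) = (\<Sum>i\<le>?N. coeff (P+Q) i * m i)"
    by (rule Lfun_eq) (meson degree_add_le max.cobounded1 max.cobounded2)
  also have "\<dots> = (\<Sum>i\<le>?N. coeff P i * m i) + (\<Sum>i\<le>?N. coeff Q i * m i)"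
    by (simp add: distrib_right sum.distrib)
  also have "\<dots> = Lfun m P + Lfun m Q"
    by (simp add: Lfun_eq[of P ?N] Lfun_eq[of Q ?N])
  finally show ?thesis .
qed

lemma Lfun_smult: "Lfun m (smult c P) = c * Lfun m P"
proof -
  have "Lfun m (smult c P) = (\<Sum>i\<le>degree P. coeff (smult c P) i * m i)"
    by (rule Lfun_eq) (simp add: degree_smult_le)
  also have "\<dots> = c * Lfun m P" by (simp add: Lfun_def sum_distrib_left mult.assoc)
  finally show ?thesis .
qed

lemma Lfun_0[simp]: "Lfun m 0 = 0"
  by (simp add: Lfun_def)

lemma Lfun_diff: "Lfun m (P - Q) = Lfun m P - Lfun m Q"
proof -
  have "P - Q = P + smult (-1) Q" by simp
  then show ?thesis by (simp only: Lfun_add Lfun_smult) simp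
qed

lemma Lfun_sum: "finite A \<Longrightarrow> Lfun m (sum f A) = (\<Sum>a\<in>A. Lfun m (f a))"
  by (induction A rule: finite_induct) (simp_all add: Lfun_add)

lemma coeff_polypart: "coeff (polypart m P) j = (\<Sum>i\<in>{j+1..degree P}. coeff P i * m (i-j-1))"
  unfolding polypart_def by (auto simp: nth_default_def)

lemma coeff_polypart_gen: "degree P \<le> N \<Longrightarrow>
   coeff (polypart m P) j = (\<Sum>i\<in>{j+1..N}. coeff P i * m (i-j-1))"
  unfolding coeff_polypart
  by (rule sum.mono_neutral_left) (auto simp: coeff_eq_0)

lemma polypart_add: "polypart m (P + Q) = polypart m P + polypart m Q"
proof (rule poly_eqI)
  fix j
  let ?N = "max (degree P) (degree Q)"
  have "coeff (polypart m (P+Q)) j = (\<Sum>i\<in>{j+1..?N}. coeff (P+Q) i * m (i-j-1))"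
    by (rule coeff_polypart_gen) (meson degree_add_le max.cobounded1 max.cobounded2)
  also have "\<dots> = coeff (polypart m P) j + coeff (polypart m Q) j"
    by (simp add: coeff_polypart_gen[of P ?N] coeff_polypart_gen[of Q ?N] distrib_right sum.distrib)
  finally show "coeff (polypart m (P + Q)) j = coeff (polypart m P + polypart m Q) j" by simp
qed

lemma polypart_smult: "polypart m (smult c P) = smult c (polypart m P)"
proof (rule poly_eqI)
  fix j
  have "coeff (polypart m (smult c P)) j = (\<Sum>i\<in>{j+1..degree P}. coeff (smult c P) i * m (i-j-1))"
    by (rule coeff_polypart_gen) (simp add: degree_smult_le)
  then show "coeff (polypart m (smult c P)) j = coeff (smult c (polypart m P)) j"
    by (simp add: coeff_polypart sum_distrib_left mult.assoc)
qed

lemma polypart_diff: "polypart m (P - Q) = polypart m P - polypart m Q"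
proof -
  have "P - Q = P + smult (-1) Q" by simp
  then show ?thesis by (simp only: polypart_add polypart_smult) simp
qed

lemma polypart_x: "polypart m ([:0,1:] * P) = [:0,1:] * polypart m P + [:Lfun m P:]"
proof (rule poly_eqI)
  fix j
  let ?N = "degree P"
  have xP: "[:0,1:] * P = pCons 0 P" by simp
  have "coeff (polypart m ([:0,1:] * P)) j = (\<Sum>i\<in>{j+1..Suc ?N}. coeff (pCons 0 P) i * m (i-j-1))"
    unfolding xP by (rule coeff_polypart_gen) (simp add: degree_pCons_le)
  also have "\<dots> = (\<Sum>i\<in>{Suc j..Suc ?N}. coeff (pCons 0 P) i * m (i-j-1))" by simp
  also have "\<dots> = (\<Sum>i\<in>{j..?N}. coeff P i * m (i - j))"
    by (subst sum.shift_bounds_cl_Suc_ivl) simp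
  finally have A: "coeff (polypart m ([:0,1:] * P)) j = (\<Sum>i\<in>{j..?N}. coeff P i * m (i - j))" .
  show "coeff (polypart m ([:0,1:] * P)) j = coeff ([:0,1:] * polypart m P + [:Lfun m P:]) j"
  proof (cases j)
    case 0
    then show ?thesis using A by (simp add: Lfun_def atLeast0AtMost)
  next
    case (Suc k)
    then show ?thesis using A by (simp add: coeff_polypart)
  qed
qed

lemma polypart_pCons0: "polypart m (pCons 0 P) = pCons 0 (polypart m P) + [:Lfun m P:]"
  using polypart_x[of m P] by simp



lemma phi_alg: fixes h :: complex assumes h: "h \<noteq> 0" and pf: "Rv*((f - fq)/h) = 2*Sv*f + Tv"
 shows "Rv * ((f*P - \<psi>) * ((P - Pq)/h) - P * (((f*P - \<psi>) - (fq*Pq - \<psi>q))/h)) + 2*Sv*(f*P-\<psi>)*Pq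
 = -Tv*P*Pq + (Rv*(\<psi>*Pq - P*\<psi>q))/h - 2*Sv*\<psi>*Pq"
proof -
  have pf': "Rv*((fq - f)*inverse h) = -(2*Sv*f + Tv)" using pf unfolding divide_inverse
    by (simp add: algebra_simps)
  have "Rv * ((f*P - \<psi>) * ((P - Pq)/h) - P * (((f*P - \<psi>) - (fq*Pq - \<psi>q))/h)) + 2*Sv*(f*P-\<psi>)*Pq
     = P*Pq*(Rv*((fq - f)*inverse h)) + (Rv*(\<psi>*Pq - P*\<psi>q))*inverse h + 2*Sv*(f*P-\<psi>)*Pq"
    unfolding divide_inverse by (simp add: algebra_simps)
  also have "\<dots> = -Tv*P*Pq + (Rv*(\<psi>*Pq - P*\<psi>q))/h - 2*Sv*\<psi>*Pq"
    unfolding pf' divide_inverse by (simp add: algebra_simps)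
  finally show ?thesis .
qed

lemma psi_alg: fixes h :: complex assumes h: "h \<noteq> 0" and pf: "Rv*((f - fq)/h) = 2*Sv*f + Tv"
 shows "a*Rv*((f*P1 - \<psi>1)*((P - Pq)/h) - P1*(((f*P - \<psi>) - (fq*Pq - \<psi>q))/h)) + Sv*(2*a*(f*P1-\<psi>1)*Pq - 1)
 = a*(-P1*Pq*Tv + Rv*(-\<psi>1*(P-Pq) + P1*(\<psi>-\<psi>q))/h - 2*Sv*\<psi>1*Pq) - Sv"
proof -
  have pf': "Rv*((fq - f)*inverse h) = -(2*Sv*f + Tv)" using pf unfolding divide_inverse
    by (simp add: algebra_simps)
  have "a*Rv*((f*P1 - \<psi>1)*((P - Pq)/h) - P1*(((f*P - \<psi>) - (fq*Pq - \<psi>q))/h)) + Sv*(2*a*(f*P1-\<psi>1)*Pq - 1)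
     = a*(P1*Pq*(Rv*((fq - f)*inverse h)) + Rv*(-\<psi>1*(P-Pq) + P1*(\<psi>-\<psi>q))*inverse h) + Sv*(2*a*(f*P1-\<psi>1)*Pq - 1)"
    unfolding divide_inverse by (simp add: algebra_simps)
  also have "\<dots> = a*(-P1*Pq*Tv + Rv*(-\<psi>1*(P-Pq) + P1*(\<psi>-\<psi>q))/h - 2*Sv*\<psi>1*Pq) - Sv"
    unfolding pf' divide_inverse by (simp add: algebra_simps)
  finally show ?thesis .
qed

lemma ent00r: fixes t q :: complex assumes hi: "(t*(1-q))*hv = 1" and Di: "(Rv - 2*t*(1-q)*Sv)*Dv = 1"
  and W: "a*(P*E1 - P1*E) = 1"
  shows "(P - Pq)*hv = Dv * ((a*Rv*(E1*((P-Pq)*hv) - P1*((E-Eq)*hv)) + Sv*(2*a*E1*Pq - 1) - Sv)*P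
     + (-a*(Rv*(E*((P-Pq)*hv) - P*((E-Eq)*hv)) + 2*Sv*E*Pq))*P1)"
  using hi Di W by Groebner_Basis.algebra

lemma ent01r: fixes t q :: complex assumes hi: "(t*(1-q))*hv = 1" and Di: "(Rv - 2*t*(1-q)*Sv)*Dv = 1"
  and W: "a*(P*E1 - P1*E) = 1" and wi: "w * wv = 1" "wq * wqv = 1" and pw: "Rv*((w - wq)*hv) = 2*Sv*w"
  shows "(E*wv - Eq*wqv)*hv = Dv * ((a*Rv*(E1*((P-Pq)*hv) - P1*((E-Eq)*hv)) + Sv*(2*a*E1*Pq - 1) - Sv)*(E*wv)
     + (-a*(Rv*(E*((P-Pq)*hv) - P*((E-Eq)*hv)) + 2*Sv*E*Pq))*(E1*wv))"
  using hi Di W wi pw by Groebner_Basis.algebra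

lemma ent00: fixes t q :: complex assumes h: "t*(1-q) \<noteq> 0" and D: "Rv - 2*t*(1-q)*Sv \<noteq> 0"
  and W: "a*(P*E1 - P1*E) = 1"
  shows "(P - Pq)/(t*(1-q)) = (1/(Rv - 2*t*(1-q)*Sv)) * ((a*Rv*(E1*((P-Pq)/(t*(1-q))) - P1*((E-Eq)/(t*(1-q)))) + Sv*(2*a*E1*Pq - 1) - Sv)*P
     + (-a*(Rv*(E*((P-Pq)/(t*(1-q))) - P*((E-Eq)/(t*(1-q)))) + 2*Sv*E*Pq))*P1)"
proof -
  define hv where "hv = inverse (t*(1-q))"
  define Dv where "Dv = inverse (Rv - 2*t*(1-q)*Sv)"
  have hi: "(t*(1-q)) * hv = 1" unfolding hv_def by (rule right_inverse[OF h])
  have Di: "(Rv - 2*t*(1-q)*Sv) * Dv = 1" unfolding Dv_def by (rule right_inverse[OF D])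
  show ?thesis unfolding divide_inverse mult_1_left hv_def[symmetric] Dv_def[symmetric] by (rule ent00r[OF hi Di W])
qed

lemma ent01: fixes t q :: complex assumes h: "t*(1-q) \<noteq> 0" and D: "Rv - 2*t*(1-q)*Sv \<noteq> 0"
  and W: "a*(P*E1 - P1*E) = 1" and w: "w \<noteq> 0" "wq \<noteq> 0" and pw: "Rv*((w - wq)/(t*(1-q))) = 2*Sv*w"
  shows "(E/w - Eq/wq)/(t*(1-q)) = (1/(Rv - 2*t*(1-q)*Sv)) * ((a*Rv*(E1*((P-Pq)/(t*(1-q))) - P1*((E-Eq)/(t*(1-q)))) + Sv*(2*a*E1*Pq - 1) - Sv)*(E/w)
     + (-a*(Rv*(E*((P-Pq)/(t*(1-q))) - P*((E-Eq)/(t*(1-q)))) + 2*Sv*E*Pq))*(E1/w))"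
proof -
  define hv where "hv = inverse (t*(1-q))"
  define Dv where "Dv = inverse (Rv - 2*t*(1-q)*Sv)"
  have hi: "(t*(1-q)) * hv = 1" unfolding hv_def by (rule right_inverse[OF h])
  have Di: "(Rv - 2*t*(1-q)*Sv) * Dv = 1" unfolding Dv_def by (rule right_inverse[OF D])
  define wv where "wv = inverse w"
  define wqv where "wqv = inverse wq"
  have wi: "w * wv = 1" "wq * wqv = 1" unfolding wv_def wqv_def by (rule right_inverse[OF w(1)], rule right_inverse[OF w(2)])
  show ?thesis using pw unfolding divide_inverse mult_1_left hv_def[symmetric] Dv_def[symmetric] wv_def[symmetric] wqv_def[symmetric] by (rule ent01r[OF hi Di W wi])
qed

lemma ent10: fixes t q :: complex assumes h: "t*(1-q) \<noteq> 0" and D: "Rv - 2*t*(1-q)*Sv \<noteq> 0"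
  and W: "a1*(P1*E2 - P2*E1) = 1" and rp: "a*P = x*P1 - b*P1 - a1*P2"
  shows "(P1 - P1q)/(t*(1-q)) = (1/(Rv - 2*t*(1-q)*Sv)) * ((a*(Rv*(E1*((P1-P1q)/(t*(1-q))) - P1*((E1-E1q)/(t*(1-q)))) + 2*Sv*E1*P1q))*P
     + ((a1*Rv*(E2*((P1-P1q)/(t*(1-q))) - P2*((E1-E1q)/(t*(1-q)))) + Sv*(2*a1*E2*P1q - 1)) - Sv
        - (x - b)*(Rv*(E1*((P1-P1q)/(t*(1-q))) - P1*((E1-E1q)/(t*(1-q)))) + 2*Sv*E1*P1q))*P1)"
proof -
  define hv where "hv = inverse (t*(1-q))"
  define Dv where "Dv = inverse (Rv - 2*t*(1-q)*Sv)"
  have hi: "(t*(1-q)) * hv = 1" unfolding hv_def by (rule right_inverse[OF h])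
  have Di: "(Rv - 2*t*(1-q)*Sv) * Dv = 1" unfolding Dv_def by (rule right_inverse[OF D])
  show ?thesis using hi Di W rp unfolding divide_inverse mult_1_left hv_def[symmetric] Dv_def[symmetric] by Groebner_Basis.algebra
qed

lemma ent11: fixes t q :: complex assumes h: "t*(1-q) \<noteq> 0" and D: "Rv - 2*t*(1-q)*Sv \<noteq> 0"
  and W: "a1*(P1*E2 - P2*E1) = 1" and re: "a*E = x*E1 - b*E1 - a1*E2"
  and w: "w \<noteq> 0" "wq \<noteq> 0" and pw: "Rv*((w - wq)/(t*(1-q))) = 2*Sv*w"
  shows "(E1/w - E1q/wq)/(t*(1-q)) = (1/(Rv - 2*t*(1-q)*Sv)) * ((a*(Rv*(E1*((P1-P1q)/(t*(1-q))) - P1*((E1-E1q)/(t*(1-q)))) + 2*Sv*E1*P1q))*(E/w)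
     + ((a1*Rv*(E2*((P1-P1q)/(t*(1-q))) - P2*((E1-E1q)/(t*(1-q)))) + Sv*(2*a1*E2*P1q - 1)) - Sv
        - (x - b)*(Rv*(E1*((P1-P1q)/(t*(1-q))) - P1*((E1-E1q)/(t*(1-q)))) + 2*Sv*E1*P1q))*(E1/w))"
proof -
  define hv where "hv = inverse (t*(1-q))"
  define Dv where "Dv = inverse (Rv - 2*t*(1-q)*Sv)"
  have hi: "(t*(1-q)) * hv = 1" unfolding hv_def by (rule right_inverse[OF h])
  have Di: "(Rv - 2*t*(1-q)*Sv) * Dv = 1" unfolding Dv_def by (rule right_inverse[OF D])
  define wv where "wv = inverse w"
  define wqv where "wqv = inverse wq"
  have wi: "w * wv = 1" "wq * wqv = 1" unfolding wv_def wqv_def by (rule right_inverse[OF w(1)], rule right_inverse[OF w(2)])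
  show ?thesis using hi Di W wi pw re unfolding divide_inverse mult_1_left hv_def[symmetric] Dv_def[symmetric] wv_def[symmetric] wqv_def[symmetric] by Groebner_Basis.algebra
qed



locale OP =
  fixes m :: "nat \<Rightarrow> complex" and ps :: "nat \<Rightarrow> complex poly"
  assumes deg: "\<And>n. degree (ps n) = n"
    and orth: "\<And>n k. Lfun m (ps n * ps k) = (if n = k then 1 else 0)"
begin

definition aa where "aa n = lead_coeff (ps (n-1)) / lead_coeff (ps n)"
definition bb where "bb n = Lfun m ([:0,1:] * ps n * ps n)"

lemma ps_nz: "ps n \<noteq> 0"
  using orth[of n n] by auto

lemma lc_nz: "lead_coeff (ps n) \<noteq> 0"
  using ps_nz by simp

lemma span: "degree Q \<le> N \<Longrightarrow> \<exists>c. Q = (\<Sum>k\<le>N. smult (c k) (ps k))"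
proof (induction N arbitrary: Q)
  case 0
  have d0: "degree (ps 0) = 0" by (rule deg)
  have "Q = [:coeff Q 0:]" using 0 degree_0_id[of Q] by simp
  moreover have "ps 0 = [:lead_coeff (ps 0):]" using d0 degree_0_id by (metis)
  ultimately have "Q = smult (coeff Q 0 / lead_coeff (ps 0)) (ps 0)"
    using lc_nz[of 0] by (metis d0 mult.commute nonzero_eq_divide_eq smult_pCons smult_0_right)
  then show ?case by (intro exI[of _ "\<lambda>_. coeff Q 0 / lead_coeff (ps 0)"]) simp
next
  case (Suc N)
  define c0 where "c0 = coeff Q (Suc N) / lead_coeff (ps (Suc N))"
  define Q' where "Q' = Q - smult c0 (ps (Suc N))"
  have "degree Q' \<le> N"
  proof (rule degree_le, intro allI impI)
    fix i assume "N < i"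
    show "coeff Q' i = 0"
    proof (cases "i = Suc N")
      case True
      then show ?thesis using lc_nz[of "Suc N"] deg[of "Suc N"] by (simp add: Q'_def c0_def)
    next
      case False
      then have "Suc N < i" using \<open>N < i\<close> by simp
      then show ?thesis using Suc.prems deg[of "Suc N"] by (simp add: Q'_def coeff_eq_0)
    qed
  qed
  then obtain c where c: "Q' = (\<Sum>k\<le>N. smult (c k) (ps k))" using Suc.IH by blast
  have "Q = (\<Sum>k\<le>Suc N. smult ((c(Suc N := c0)) k) (ps k))"
    using c by (simp add: Q'_def algebra_simps)
  then show ?case by blast
qed

lemma lowdeg: "degree Q < n \<Longrightarrow> Lfun m (ps n * Q) = 0"
proof -
  assume a: "degree Q < n"
  then have "degree Q \<le> n - 1" by simp
  then obtain c where c: "Q = (\<Sum>k\<le>n-1. smult (c k) (ps k))" using span[of Q "n-1"] by auto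
  have "Lfun m (ps n * Q) = (\<Sum>k\<le>n-1. c k * Lfun m (ps n * ps k))"
    unfolding c by (simp add: sum_distrib_left Lfun_sum Lfun_smult)
  also have "\<dots> = 0" using a by (intro sum.neutral) (auto simp: orth)
  finally show ?thesis .
qed

lemma L_ps: "n \<ge> 1 \<Longrightarrow> Lfun m (ps n) = 0"
  using lowdeg[of 1 n] by simp

lemma rec_p: assumes n: "n \<ge> 1"
  shows "smult (aa (Suc n)) (ps (Suc n)) = [:0,1:] * ps n - smult (bb n) (ps n) - smult (aa n) (ps (n-1))"
proof -
  define Q where "Q = [:0,1:] * ps n - smult (aa (Suc n)) (ps (Suc n)) - smult (bb n) (ps n) - smult (aa n) (ps (n-1))"
  have dQ: "degree Q \<le> n"
  proof (rule degree_le, intro allI impI)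
    fix i assume "n < i"
    show "coeff Q i = 0"
    proof (cases "i = Suc n")
      case True
      then show ?thesis using lc_nz[of "Suc n"] deg[of "Suc n"] deg[of n] deg[of "n-1"] n
        by (simp add: Q_def aa_def coeff_eq_0)
    next
      case False
      then have "Suc n < i" using \<open>n < i\<close> by simp
      then show ?thesis using deg[of "Suc n"] deg[of n] deg[of "n-1"]
        by (simp add: Q_def coeff_eq_0)
    qed
  qed
  then obtain c where c: "Q = (\<Sum>k\<le>n. smult (c k) (ps k))" using span by blast
  have cj: "Lfun m (ps j * Q) = c j" if "j \<le> n" for j
  proof -
    have "Lfun m (ps j * Q) = (\<Sum>k\<le>n. c k * Lfun m (ps j * ps k))"
      unfolding c by (simp add: sum_distrib_left Lfun_sum Lfun_smult)
    also have "\<dots> = c j" using that by (simp add: orth if_distrib cong: if_cong)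
    finally show ?thesis .
  qed
  have LQ: "Lfun m (ps j * Q) = 0" if j: "j \<le> n" for j
  proof -
    have e: "ps j * Q = ps n * ([:0,1:] * ps j) - smult (aa (Suc n)) (ps (Suc n) * ps j)
       - smult (bb n) (ps n * ps j) - smult (aa n) (ps (n-1) * ps j)"
      by (simp add: Q_def algebra_simps)
    have L: "Lfun m (ps j * Q) = Lfun m (ps n * ([:0,1:] * ps j)) - aa (Suc n) * Lfun m (ps (Suc n) * ps j)
       - bb n * Lfun m (ps n * ps j) - aa n * Lfun m (ps (n-1) * ps j)"
      unfolding e by (simp add: Lfun_diff Lfun_smult)
    consider "j + 1 < n" | "j = n - 1" | "j = n" using j n by linarith
    then show ?thesis
    proof cases
      case 1
      have "degree ([:0,1:] * ps j) < n"
        using 1 deg[of j] by (simp add: degree_pCons_eq_if)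
      then have z: "Lfun m (ps n * ([:0,1:] * ps j)) = 0" by (rule lowdeg)
      have "j \<noteq> n - 1" "j \<noteq> n" "Suc n \<noteq> j" using 1 by auto
      then show ?thesis using L z by (simp add: orth)
    next
      case 2
      define Rm where "Rm = [:0,1:] * ps (n-1) - smult (aa n) (ps n)"
      have "degree Rm \<le> n - 1"
      proof (rule degree_le, intro allI impI)
        fix i assume "n - 1 < i"
        show "coeff Rm i = 0"
        proof (cases "i = n")
          case True
          have "coeff ([:0,1:] * ps (n-1)) n = lead_coeff (ps (n-1))"
            using n deg[of "n-1"] by (cases n) auto
          then show ?thesis using lc_nz[of n] deg[of n] True by (simp add: Rm_def aa_def)
        next
          case False
          then have "n < i" using \<open>n - 1 < i\<close> by simp
          have "coeff ([:0,1:] * ps (n-1)) i = 0"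
            using \<open>n < i\<close> n deg[of "n-1"] by (cases i) (auto simp: coeff_eq_0)
          then show ?thesis using deg[of n] \<open>n < i\<close> by (simp add: Rm_def coeff_eq_0)
        qed
      qed
      then have dR: "degree Rm < n" using n by simp
      have "ps n * ([:0,1:] * ps j) = smult (aa n) (ps n * ps n) + ps n * Rm"
        using 2 by (simp add: Rm_def algebra_simps)
      then have "Lfun m (ps n * ([:0,1:] * ps j)) = aa n"
        using lowdeg[OF dR] by (simp add: Lfun_add Lfun_smult orth)
      moreover have "Suc n \<noteq> n - 1" "n \<noteq> n - 1" using n by auto
      ultimately show ?thesis using L 2 by (simp add: orth)
    next
      case 3
      have "Lfun m (ps n * ([:0,1:] * ps j)) = bb n" using 3 by (simp add: bb_def algebra_simps)
      then show ?thesis using L 3 n by (simp add: orth)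
    qed
  qed
  have "Q = 0" unfolding c using cj LQ by (intro sum.neutral) auto
  then show ?thesis unfolding Q_def by (simp add: algebra_simps)
qed

lemma rec_psi: assumes n: "n \<ge> 1"
  shows "smult (aa (Suc n)) (polypart m (ps (Suc n))) = [:0,1:] * polypart m (ps n)
     - smult (bb n) (polypart m (ps n)) - smult (aa n) (polypart m (ps (n-1)))"
  using arg_cong[OF rec_p[OF n], of "polypart m"] L_ps[OF n]
  by (simp add: polypart_diff polypart_smult polypart_pCons0)

lemma wronski: "n \<ge> 1 \<Longrightarrow>
  aa n * (poly (ps (n-1)) x * poly (polypart m (ps n)) x - poly (ps n) x * poly (polypart m (ps (n-1))) x) = 1"
proof (induction n rule: dec_induct)
  case base
  have d0: "degree (ps 0) = 0" and d1: "degree (ps 1) = 1" using deg by auto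
  have p0: "ps 0 = [:lead_coeff (ps 0):]" using d0 degree_0_id by metis
  have "Lfun m (ps 0 * ps 0) = 1" by (simp add: orth)
  then have h: "lead_coeff (ps 0) * lead_coeff (ps 0) * m 0 = 1"
    by (subst (asm) p0, subst (asm) p0) (simp add: Lfun_def)
  have "polypart m (ps 0) = 0" using d0 by (simp add: polypart_def)
  moreover have "poly (polypart m (ps 1)) x = lead_coeff (ps 1) * m 0"
    using d1 by (simp add: polypart_def)
  moreover have "poly (ps 0) x = lead_coeff (ps 0)" by (subst p0) simp
  moreover have "coeff (ps 1) 1 \<noteq> 0" by (metis d1 lc_nz)
  ultimately show ?case using h d1 by (simp add: aa_def field_simps)
next
  case (step n)
  let ?x = "[:0,1:] :: complex poly"
  have r1: "aa (Suc n) * poly (ps (Suc n)) x = x * poly (ps n) x - bb n * poly (ps n) x - aa n * poly (ps (n-1)) x"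
    using arg_cong[OF rec_p[of n], of "\<lambda>P. poly P x"] step by simp
  have r2: "aa (Suc n) * poly (polypart m (ps (Suc n))) x = x * poly (polypart m (ps n)) x
     - bb n * poly (polypart m (ps n)) x - aa n * poly (polypart m (ps (n-1))) x"
    using arg_cong[OF rec_psi[of n], of "\<lambda>P. poly P x"] step by simp
  define A where "A = poly (ps (n-1)) x" 
  define B where "B = poly (ps n) x" 
  define C where "C = poly (ps (Suc n)) x" 
  define D where "D = poly (polypart m (ps (n-1))) x" 
  define E where "E = poly (polypart m (ps n)) x" 
  define F where "F = poly (polypart m (ps (Suc n))) x"
  have r1': "aa (Suc n) * C = x * B - bb n * B - aa n * A" using r1 by (simp add: A_def B_def C_def)
  have r2': "aa (Suc n) * F = x * E - bb n * E - aa n * D" using r2 by (simp add: D_def E_def F_def)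
  have IH: "aa n * (A * E - B * D) = 1" using step.IH by (simp add: A_def B_def D_def E_def)
  have "aa (Suc n) * (B * F - C * E) = B * (aa (Suc n) * F) - (aa (Suc n) * C) * E"
    by (simp add: algebra_simps)
  also have "\<dots> = B * (x * E - bb n * E - aa n * D) - (x * B - bb n * B - aa n * A) * E"
    by (simp only: r1' r2')
  also have "\<dots> = aa n * (A * E - B * D)" by (simp add: algebra_simps)
  finally show ?case using IH by (simp add: B_def C_def E_def F_def)
qed

end


lemma mat2_mult: "(k \<cdot>\<^sub>m mat_of_rows_list 2 [[a,b],[c,d]]) * mat_of_rows_list 2 [[e,f],[g,h::complex]]
  = mat_of_rows_list 2 [[k*(a*e+b*g), k*(a*f+b*h)],[k*(c*e+d*g), k*(c*f+d*h)]]"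
  apply (rule eq_matI)
  apply (auto simp: mat_of_rows_list_def scalar_prod_def less_2_cases_iff)
  apply (auto simp: less_Suc_eq algebra_simps)
  done

lemma qDmat_Y: "qDmat q (Ymat mu p w n) x t = mat_of_rows_list 2
  [[(pF p n x t - pF p n x (q*t))/(t*(1-q)), (epsF mu p n x t / w x t - epsF mu p n x (q*t) / w x (q*t))/(t*(1-q))],
   [(pF p (n-1) x t - pF p (n-1) x (q*t))/(t*(1-q)), (epsF mu p (n-1) x t / w x t - epsF mu p (n-1) x (q*t) / w x (q*t))/(t*(1-q))]]"
  unfolding qDmat_def Ymat_def
  apply (rule eq_matI)
  apply (auto simp: mat_of_rows_list_def less_2_cases_iff)
  apply (auto simp: less_Suc_eq)
  done

context OP begin
lemma wr_val: "n \<ge> 1 \<Longrightarrow> aa n * (poly (ps n) x * (f * poly (ps (n-1)) x - poly (polypart m (ps (n-1))) x)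
   - poly (ps (n-1)) x * (f * poly (ps n) x - poly (polypart m (ps n)) x)) = 1"
  using wronski[of n x] by (simp add: algebra_simps)

lemma rec_val: "n \<ge> 1 \<Longrightarrow> aa (Suc n) * poly (ps (Suc n)) x = x * poly (ps n) x - bb n * poly (ps n) x - aa n * poly (ps (n-1)) x"
  using arg_cong[OF rec_p[of n], of "\<lambda>P. poly P x"] by simp

lemma rece_val: "n \<ge> 1 \<Longrightarrow> aa (Suc n) * (f * poly (ps (Suc n)) x - poly (polypart m (ps (Suc n))) x)
   = x * (f * poly (ps n) x - poly (polypart m (ps n)) x) - bb n * (f * poly (ps n) x - poly (polypart m (ps n)) x)
     - aa n * (f * poly (ps (n-1)) x - poly (polypart m (ps (n-1))) x)"
proof -
  assume n: "n \<ge> 1"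
  have r1: "aa (Suc n) * poly (ps (Suc n)) x = x * poly (ps n) x - bb n * poly (ps n) x - aa n * poly (ps (n-1)) x"
    using rec_val[OF n] .
  have r2: "aa (Suc n) * poly (polypart m (ps (Suc n))) x = x * poly (polypart m (ps n)) x
     - bb n * poly (polypart m (ps n)) x - aa n * poly (polypart m (ps (n-1))) x"
    using arg_cong[OF rec_psi[OF n], of "\<lambda>P. poly P x"] by simp
  have "aa (Suc n) * (f * poly (ps (Suc n)) x - poly (polypart m (ps (Suc n))) x)
     = f * (aa (Suc n) * poly (ps (Suc n)) x) - aa (Suc n) * poly (polypart m (ps (Suc n))) x"
    by (simp add: algebra_simps)
  also have "\<dots> = f * (x * poly (ps n) x - bb n * poly (ps n) x - aa n * poly (ps (n-1)) x)
     - (x * poly (polypart m (ps n)) x - bb n * poly (polypart m (ps n)) x - aa n * poly (polypart m (ps (n-1))) x)"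
    by (simp only: r1 r2)
  finally show ?thesis by (simp add: algebra_simps)
qed
end

lemma main_fixed:
  fixes q t :: complex and n :: nat
    and mu :: "nat \<Rightarrow> complex \<Rightarrow> complex"
    and p :: "nat \<Rightarrow> complex \<Rightarrow> complex poly"
    and w :: "complex \<Rightarrow> complex \<Rightarrow> complex"
    and R S T :: "complex \<Rightarrow> complex poly"
  assumes q1: "q \<noteq> 1" and t0: "t \<noteq> 0" and n2: "n \<ge> 2"
    and deg: "\<And>n. degree (p n t) = n"
    and orthonormal: "\<And>n m. Lfun (\<lambda>k. mu k t) (p n t * p m t) = (if n = m then 1 else 0)"
    and Pearson_w: "\<exists>r. \<forall>x. r < norm x \<longrightarrow>
          poly (R t) x * qD q w x t = 2 * poly (S t) x * w x t"
    and Pearson_f: "\<exists>r. \<forall>x. r < norm x \<longrightarrow>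
          poly (R t) x * qD q (\<lambda>x t. stieltjes (\<lambda>k. mu k t) x) x t
            = 2 * poly (S t) x * stieltjes (\<lambda>k. mu k t) x + poly (T t) x"
  shows "(\<exists>P r. \<forall>x. r < norm x \<longrightarrow> PhiF q mu p R S n x t = poly P x)
        \<and> (\<exists>P r. \<forall>x. r < norm x \<longrightarrow> PsiF q mu p R S n x t = poly P x)
        \<and> (\<exists>r. \<forall>x. r < norm x \<and> w x t \<noteq> 0 \<and> w x (q * t) \<noteq> 0
               \<and> poly (R t) x - 2 * t * (1 - q) * poly (S t) x \<noteq> 0 \<longrightarrow>
             qDmat q (Ymat mu p w n) x t = Bmat q mu p R S n x t * Ymat mu p w n x t)"
proof -
  interpret O: OP "\<lambda>k. mu k t" "\<lambda>n. p n t" by unfold_locales (auto simp: deg orthonormal)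
  define h where "h = t*(1-q)"
  have h0: "h \<noteq> 0" using t0 q1 by (simp add: h_def)
  have ht: "t * (1 - q) \<noteq> 0" using h0 by (simp add: h_def)
  have aa: "\<And>j. O.aa j = acoef p j t" by (simp add: O.aa_def acoef_def)
  have bb: "\<And>j. O.bb j = bcoef mu p j t" by (simp add: O.bb_def bcoef_def)
  obtain rf where rf: "\<forall>x. rf < norm x \<longrightarrow> poly (R t) x * qD q (\<lambda>x t. stieltjes (\<lambda>k. mu k t) x) x t
            = 2 * poly (S t) x * stieltjes (\<lambda>k. mu k t) x + poly (T t) x"
    using Pearson_f by blast
  obtain rw where rw: "\<forall>x. rw < norm x \<longrightarrow> poly (R t) x * qD q w x t = 2 * poly (S t) x * w x t"
    using Pearson_w by blast
  have eps: "\<And>j x s. epsF mu p j x s = stieltjes (\<lambda>k. mu k s) x * pF p j x s - poly (polypart (\<lambda>k. mu k s) (p j s)) x"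
    by (simp add: epsF_def epsf_def pF_def)
  define \<psi> where "\<psi> = polypart (\<lambda>k. mu k t) (p n t)"
  define \<psi>q where "\<psi>q = polypart (\<lambda>k. mu k (q*t)) (p n (q*t))"
  define \<psi>1 where "\<psi>1 = polypart (\<lambda>k. mu k t) (p (n-1) t)"
  have pfx: "poly (R t) x * ((stieltjes (\<lambda>k. mu k t) x - stieltjes (\<lambda>k. mu k (q*t)) x)/h)
      = 2 * poly (S t) x * stieltjes (\<lambda>k. mu k t) x + poly (T t) x" if "rf < norm x" for x
    using rf that by (simp add: qD_def h_def)
  have C1: "\<exists>P r. \<forall>x. r < norm x \<longrightarrow> PhiF q mu p R S n x t = poly P x"
  proof (intro exI[of _ "- (T t * p n t * p n (q*t)) + smult (1/h) (R t * (\<psi> * p n (q*t) - p n t * \<psi>q))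
        - smult 2 (S t * \<psi> * p n (q*t))"] exI[of _ rf] allI impI)
    fix x :: complex assume x: "rf < norm x"
    have "PhiF q mu p R S n x t = poly (R t) x * ((stieltjes (\<lambda>k. mu k t) x * poly (p n t) x - poly \<psi> x) * ((poly (p n t) x - poly (p n (q*t)) x)/h)
       - poly (p n t) x * (((stieltjes (\<lambda>k. mu k t) x * poly (p n t) x - poly \<psi> x)
          - (stieltjes (\<lambda>k. mu k (q*t)) x * poly (p n (q*t)) x - poly \<psi>q x))/h))
       + 2 * poly (S t) x * (stieltjes (\<lambda>k. mu k t) x * poly (p n t) x - poly \<psi> x) * poly (p n (q*t)) x"
      by (simp add: PhiF_def qD_def eps pF_def h_def \<psi>_def \<psi>q_def)
    also have "\<dots> = - poly (T t) x * poly (p n t) x * poly (p n (q*t)) x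
       + (poly (R t) x * (poly \<psi> x * poly (p n (q*t)) x - poly (p n t) x * poly \<psi>q x))/h
       - 2 * poly (S t) x * poly \<psi> x * poly (p n (q*t)) x"
      by (rule phi_alg[OF h0 pfx[OF x]])
    also have "\<dots> = poly (- (T t * p n t * p n (q*t)) + smult (1/h) (R t * (\<psi> * p n (q*t) - p n t * \<psi>q))
        - smult 2 (S t * \<psi> * p n (q*t))) x"
      using h0 by (simp add: field_simps)
    finally show "PhiF q mu p R S n x t = poly (- (T t * p n t * p n (q*t)) + smult (1/h) (R t * (\<psi> * p n (q*t) - p n t * \<psi>q))
        - smult 2 (S t * \<psi> * p n (q*t))) x" .
  qed
  have C2: "\<exists>P r. \<forall>x. r < norm x \<longrightarrow> PsiF q mu p R S n x t = poly P x"
  proof (intro exI[of _ "smult (acoef p n t) (- (p (n-1) t * p n (q*t) * T t)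
        + smult (1/h) (R t * (- (\<psi>1 * (p n t - p n (q*t))) + p (n-1) t * (\<psi> - \<psi>q)))
        - smult 2 (S t * \<psi>1 * p n (q*t))) - S t"] exI[of _ rf] allI impI)
    fix x :: complex assume x: "rf < norm x"
    have "PsiF q mu p R S n x t = acoef p n t * poly (R t) x * ((stieltjes (\<lambda>k. mu k t) x * poly (p (n-1) t) x - poly \<psi>1 x) * ((poly (p n t) x - poly (p n (q*t)) x)/h)
       - poly (p (n-1) t) x * (((stieltjes (\<lambda>k. mu k t) x * poly (p n t) x - poly \<psi> x)
          - (stieltjes (\<lambda>k. mu k (q*t)) x * poly (p n (q*t)) x - poly \<psi>q x))/h))
       + poly (S t) x * (2 * acoef p n t * (stieltjes (\<lambda>k. mu k t) x * poly (p (n-1) t) x - poly \<psi>1 x) * poly (p n (q*t)) x - 1)"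
      by (simp add: PsiF_def qD_def eps pF_def h_def \<psi>_def \<psi>q_def \<psi>1_def)
    also have "\<dots> = acoef p n t * (- poly (p (n-1) t) x * poly (p n (q*t)) x * poly (T t) x
       + poly (R t) x * (- poly \<psi>1 x * (poly (p n t) x - poly (p n (q*t)) x) + poly (p (n-1) t) x * (poly \<psi> x - poly \<psi>q x))/h
       - 2 * poly (S t) x * poly \<psi>1 x * poly (p n (q*t)) x) - poly (S t) x"
      by (rule psi_alg[OF h0 pfx[OF x]])
    also have "\<dots> = poly (smult (acoef p n t) (- (p (n-1) t * p n (q*t) * T t)
        + smult (1/h) (R t * (- (\<psi>1 * (p n t - p n (q*t))) + p (n-1) t * (\<psi> - \<psi>q)))
        - smult 2 (S t * \<psi>1 * p n (q*t))) - S t) x"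
      using h0 by (simp add: field_simps)
    finally show "PsiF q mu p R S n x t = poly (smult (acoef p n t) (- (p (n-1) t * p n (q*t) * T t)
        + smult (1/h) (R t * (- (\<psi>1 * (p n t - p n (q*t))) + p (n-1) t * (\<psi> - \<psi>q)))
        - smult 2 (S t * \<psi>1 * p n (q*t))) - S t) x" .
  qed
  have C3: "\<exists>r. \<forall>x. r < norm x \<and> w x t \<noteq> 0 \<and> w x (q * t) \<noteq> 0
               \<and> poly (R t) x - 2 * t * (1 - q) * poly (S t) x \<noteq> 0 \<longrightarrow>
             qDmat q (Ymat mu p w n) x t = Bmat q mu p R S n x t * Ymat mu p w n x t"
  proof (intro exI[of _ rw] allI impI)
    fix x :: complex assume a: "rw < norm x \<and> w x t \<noteq> 0 \<and> w x (q * t) \<noteq> 0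
               \<and> poly (R t) x - 2 * t * (1 - q) * poly (S t) x \<noteq> 0"
    then have D: "poly (R t) x - 2 * t * (1 - q) * poly (S t) x \<noteq> 0" and w1: "w x t \<noteq> 0"
      and w2: "w x (q * t) \<noteq> 0" by auto
    have pw: "poly (R t) x * ((w x t - w x (q*t)) / (t*(1-q))) = 2 * poly (S t) x * w x t"
      using rw a by (simp add: qD_def)
    let ?f = "stieltjes (\<lambda>k. mu k t) x"
    have W: "acoef p n t * (pF p n x t * epsF mu p (n-1) x t - pF p (n-1) x t * epsF mu p n x t) = 1"
      using O.wr_val[of n x ?f] n2 by (simp add: eps pF_def aa)
    have W1: "acoef p (n-1) t * (pF p (n-1) x t * epsF mu p (n-1-1) x t - pF p (n-1-1) x t * epsF mu p (n-1) x t) = 1"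
      using O.wr_val[of "n-1" x ?f] n2 by (simp add: eps pF_def aa)
    have nn: "Suc (n-1) = n" using n2 by simp
    have rp: "acoef p n t * pF p n x t = x * pF p (n-1) x t - bcoef mu p (n-1) t * pF p (n-1) x t - acoef p (n-1) t * pF p (n-1-1) x t"
      using O.rec_val[of "n-1" x] n2 unfolding nn by (simp add: pF_def aa bb)
    have re: "acoef p n t * epsF mu p n x t = x * epsF mu p (n-1) x t - bcoef mu p (n-1) t * epsF mu p (n-1) x t - acoef p (n-1) t * epsF mu p (n-1-1) x t"
      using O.rece_val[of "n-1" ?f x] n2 unfolding nn by (simp add: eps pF_def aa bb)
    show "qDmat q (Ymat mu p w n) x t = Bmat q mu p R S n x t * Ymat mu p w n x t"
      unfolding qDmat_Y Bmat_def Ymat_def mat2_mult PhiF_def PsiF_def qD_def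
      apply (rule arg_cong[where f="mat_of_rows_list 2"])
      apply (simp only: list.inject)
      apply (intro conjI TrueI refl)
         apply (rule ent00[OF ht D W])
        apply (rule ent01[OF ht D W w1 w2 pw])
       apply (rule ent10[OF ht D W1 rp])
      apply (rule ent11[OF ht D W1 re w1 w2 pw])
      done
  qed
  show ?thesis using C1 C2 C3 by blast
qed


theorem mainTheorem2:
  fixes q :: complex
    and U :: "complex set"
    and mu :: "nat \<Rightarrow> complex \<Rightarrow> complex"
    and p :: "nat \<Rightarrow> complex \<Rightarrow> complex poly"
    and w :: "complex \<Rightarrow> complex \<Rightarrow> complex"
    and R S T :: "complex \<Rightarrow> complex poly"
  assumes q: "0 < norm q" "norm q < 1"
    and U: "\<And>t. t \<in> U \<Longrightarrow> t \<noteq> 0 \<and> q * t \<in> U"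
    and hankel: "\<And>t n. t \<in> U \<Longrightarrow> hankel_det (\<lambda>k. mu k t) n \<noteq> 0"
    and growth: "\<And>t. t \<in> U \<Longrightarrow> \<exists>C M. \<forall>k. norm (mu k t) \<le> C * M ^ k"
    and deg: "\<And>t n. t \<in> U \<Longrightarrow> degree (p n t) = n"
    and orthonormal: "\<And>t n m. t \<in> U \<Longrightarrow>
          Lfun (\<lambda>k. mu k t) (p n t * p m t) = (if n = m then 1 else 0)"
    and RS_nonzero: "\<And>t. t \<in> U \<Longrightarrow> R t - smult (2 * t * (1 - q)) (S t) \<noteq> 0"
    and Pearson_w: "\<And>t. t \<in> U \<Longrightarrow> \<exists>r. \<forall>x. r < norm x \<longrightarrow>
          poly (R t) x * qD q w x t = 2 * poly (S t) x * w x t"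
    and Pearson_f: "\<And>t. t \<in> U \<Longrightarrow> \<exists>r. \<forall>x. r < norm x \<longrightarrow>
          poly (R t) x * qD q (\<lambda>x t. stieltjes (\<lambda>k. mu k t) x) x t
            = 2 * poly (S t) x * stieltjes (\<lambda>k. mu k t) x + poly (T t) x"
  shows "\<forall>t\<in>U. \<forall>n\<ge>2.
          (\<exists>P r. \<forall>x. r < norm x \<longrightarrow> PhiF q mu p R S n x t = poly P x)
        \<and> (\<exists>P r. \<forall>x. r < norm x \<longrightarrow> PsiF q mu p R S n x t = poly P x)
        \<and> (\<exists>r. \<forall>x. r < norm x \<and> w x t \<noteq> 0 \<and> w x (q * t) \<noteq> 0
               \<and> poly (R t) x - 2 * t * (1 - q) * poly (S t) x \<noteq> 0 \<longrightarrow>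
             qDmat q (Ymat mu p w n) x t = Bmat q mu p R S n x t * Ymat mu p w n x t)"
proof (intro ballI allI impI)
  fix t :: complex and n :: nat assume tU: "t \<in> U" and n2: "2 \<le> n"
  have q1: "q \<noteq> 1" using q by auto
  have t0: "t \<noteq> 0" using U[OF tU] by simp
  show "(\<exists>P r. \<forall>x. r < norm x \<longrightarrow> PhiF q mu p R S n x t = poly P x)
        \<and> (\<exists>P r. \<forall>x. r < norm x \<longrightarrow> PsiF q mu p R S n x t = poly P x)
        \<and> (\<exists>r. \<forall>x. r < norm x \<and> w x t \<noteq> 0 \<and> w x (q * t) \<noteq> 0
               \<and> poly (R t) x - 2 * t * (1 - q) * poly (S t) x \<noteq> 0 \<longrightarrow>
             qDmat q (Ymat mu p w n) x t = Bmat q mu p R S n x t * Ymat mu p w n x t)"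
    apply (rule main_fixed)
          apply (rule q1)
         apply (rule t0)
        apply (rule n2)
       apply (rule deg[OF tU])
      apply (rule orthonormal[OF tU])
     apply (rule Pearson_w[OF tU])
    apply (rule Pearson_f[OF tU])
    done
qed

end
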